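(* In the dynamic stochastic block model with noise-free ULSE-n1 embeddings $\tilde{\mathbf{Y}}^{(t)}$ described in the context, for all $i,j\in[n]$ and $t,u\in[T]$: (i) if $\mathbf{P}^{(t)}_{i:}=\mathbf{P}^{(t)}_{j:}$ then $\tilde{\mathbf{Y}}^{(t)}_{i:}=\tilde{\mathbf{Y}}^{(t)}_{j:}$; (ii) if $\mathbf{P}^{(t)}_{i:}=\mathbf{P}^{(u)}_{i:}$ and $\tilde{\mathbf{D}}^{(t)}=\tilde{\mathbf{D}}^{(u)}$ then $\tilde{\mathbf{Y}}^{(t)}_{i:}=\tilde{\mathbf{Y}}^{(u)}_{i:}$.
   Context: Setting: $n$ nodes with labels $z_i\in[K]$, symmetric $\mathbf{B}^{(1)},\dots,\mathbf{B}^{(T)}\in[0,1]^{K\times K}$ with all entries positive, $\rho\in(0,1]$, and edge probability matrices $P^{(t)}_{ij}=\rho B^{(t)}_{z_iz_j}$; $\mathbf{P}^{(t)}_{i:}$ denotes the $i$-th row. Noise-free degrees $\tilde d^{(t)}_i=\sum_jP^{(t)}_{ij}$, $\tilde{\mathbf{D}}^{(t)}=\mathrm{diag}(\tilde d^{(t)}_1,\dots,\tilde d^{(t)}_n)$. Noise-free ULSE-n1 with $d=K-1$: $\tilde{\mathbf{L}}^{(t)}=\mathbf{I}_n-\tilde{\mathbf{D}}^{(t)-1/2}\mathbf{P}^{(t)}\tilde{\mathbf{D}}^{(t)-1/2}$, $\tilde{\mathbf{L}}=[\tilde{\mathbf{L}}^{(1)}\mid\cdots\mid\tilde{\mathbf{L}}^{(T)}]\in\mathbb{R}^{n\times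 nT}$ with singular values $\tilde\sigma_1\le\cdots\le\tilde\sigma_n$; $\tilde{\mathbf{\Sigma}}=\mathrm{diag}(\tilde\sigma_2,\dots,\tilde\sigma_K)$, assumed invertible; $\tilde{\mathbf{U}}\in\mathbb{R}^{n\times d}$, $\tilde{\mathbf{V}}\in\mathbb{R}^{nT\times d}$ with orthonormal columns satisfying $\tilde{\mathbf{L}}\tilde{\mathbf{V}}=\tilde{\mathbf{U}}\tilde{\mathbf{\Sigma}}$, $\tilde{\mathbf{L}}^\top\tilde{\mathbf{U}}=\tilde{\mathbf{V}}\tilde{\mathbf{\Sigma}}$; $\tilde{\mathbf{V}}^{(t)}$ the $t$-th block of $n$ rows of $\tilde{\mathbf{V}}$; and $\tilde{\mathbf{Y}}^{(t)}=\tilde{\mathbf{V}}^{(t)}\tilde{\mathbf{\Sigma}}^{1/2}-\tilde{\mathbf{U}}\tilde{\mathbf{\Sigma}}^{-1/2}$. *)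

theory Defs
  imports Complex_Main
begin

text \<open>Conventions: matrices are functions nat \<Rightarrow> nat \<Rightarrow> real with explicit
  index bounds; all indices are 0-based.  Nodes are 0..n-1, communities 0..K-1,
  time points 0..T-1.  The column index c < n*T of the concatenated matrix
  [L1 | ... | LT] corresponds to block c div n and column c mod n.\<close>

definition dsbm_P :: "real \<Rightarrow> (nat \<Rightarrow> nat \<Rightarrow> nat \<Rightarrow> real) \<Rightarrow> (nat \<Rightarrow> nat)
    \<Rightarrow> nat \<Rightarrow> nat \<Rightarrow> nat \<Rightarrow> real" where
  "dsbm_P \<rho> B z t i j = \<rho> * B t (z i) (z j)"

definition deg :: "nat \<Rightarrow> (nat \<Rightarrow> nat \<Rightarrow> nat \<Rightarrow> real) \<Rightarrow> nat \<Rightarrow> nat \<Rightarrow> real" where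
  "deg n P t i = (\<Sum>j<n. P t i j)"

definition lap :: "nat \<Rightarrow> (nat \<Rightarrow> nat \<Rightarrow> nat \<Rightarrow> real) \<Rightarrow> nat \<Rightarrow> nat \<Rightarrow> nat \<Rightarrow> real" where
  "lap n P t i j = (if i = j then 1 else 0)
      - P t i j / (sqrt (deg n P t i) * sqrt (deg n P t j))"

definition lapcat :: "nat \<Rightarrow> (nat \<Rightarrow> nat \<Rightarrow> nat \<Rightarrow> real) \<Rightarrow> nat \<Rightarrow> nat \<Rightarrow> real" where
  "lapcat n P i c = lap n P (c div n) i (c mod n)"

text \<open>sigma 0 \<le> ... \<le> sigma (m-1) are the singular values (in increasing order) of the
  m x p matrix A with m \<le> p: there is a (thin) singular value decomposition
  A = W diag(sigma) Q^T with W an orthogonal m x m matrix and Q a p x m matrix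
  with orthonormal columns.\<close>
definition singular_values_asc ::
  "nat \<Rightarrow> nat \<Rightarrow> (nat \<Rightarrow> nat \<Rightarrow> real) \<Rightarrow> (nat \<Rightarrow> real) \<Rightarrow> bool" where
  "singular_values_asc m p A \<sigma> \<longleftrightarrow>
     (\<forall>a<m. 0 \<le> \<sigma> a) \<and> (\<forall>a b. a \<le> b \<and> b < m \<longrightarrow> \<sigma> a \<le> \<sigma> b) \<and>
     (\<exists>W Q. (\<forall>a<m. \<forall>b<m. (\<Sum>i<m. W i a * W i b) = (if a = b then 1 else 0)) \<and>
            (\<forall>a<m. \<forall>b<m. (\<Sum>c<p. Q c a * Q c b) = (if a = b then 1 else 0)) \<and>
            (\<forall>i<m. \<forall>c<p. A i c = (\<Sum>a<m. W i a * \<sigma> a * Q c a)))"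

definition orthonormal_cols :: "nat \<Rightarrow> nat \<Rightarrow> (nat \<Rightarrow> nat \<Rightarrow> real) \<Rightarrow> bool" where
  "orthonormal_cols r d M \<longleftrightarrow>
     (\<forall>a<d. \<forall>b<d. (\<Sum>i<r. M i a * M i b) = (if a = b then 1 else 0))"

text \<open>Embedding Y^(t) = V^(t) Sigma^{1/2} - U Sigma^{-1/2}, where
  Sigma = diag(sigma_2,...,sigma_K) (1-based), i.e. entry a (0-based) is sigma (a+1)
  in our 0-based indexing of the singular values.\<close>
definition ulse_Y :: "nat \<Rightarrow> (nat \<Rightarrow> real) \<Rightarrow> (nat \<Rightarrow> nat \<Rightarrow> real) \<Rightarrow> (nat \<Rightarrow> nat \<Rightarrow> real)
    \<Rightarrow> nat \<Rightarrow> nat \<Rightarrow> nat \<Rightarrow> real" where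
  "ulse_Y n \<sigma> U V t i a = V (t * n + i) a * sqrt (\<sigma> (a + 1)) - U i a / sqrt (\<sigma> (a + 1))"

end

theory Submission
  imports Defs
begin

lemma key:
  fixes P :: "nat \<Rightarrow> nat \<Rightarrow> nat \<Rightarrow> real"
  assumes symP: "\<forall>k<n. P t k i = P t i k"
    and i: "i < n" and t: "t < T"
    and LtU: "(\<Sum>k<n. lapcat n P k (t * n + i) * U k a) = V (t * n + i) a * s"
    and s: "0 < s"
  shows "ulse_Y n (\<lambda>_. s) U V t i a =
     - (\<Sum>k<n. P t i k / (sqrt (deg n P t i) * sqrt (deg n P t k)) * U k a) / sqrt s"
proof -
  have dv: "(t * n + i) div n = t" "(t * n + i) mod n = i" using i by auto
  have "(\<Sum>k<n. lapcat n P k (t * n + i) * U k a)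
      = (\<Sum>k<n. (if k = i then U k a else 0)
          - P t i k / (sqrt (deg n P t i) * sqrt (deg n P t k)) * U k a)"
  proof (rule sum.cong)
    fix k assume k: "k \<in> {..<n}"
    show "lapcat n P k (t * n + i) * U k a = (if k = i then U k a else 0)
          - P t i k / (sqrt (deg n P t i) * sqrt (deg n P t k)) * U k a"
    proof -
      have pk: "P t k i = P t i k" using symP k by simp
      show ?thesis
        unfolding lapcat_def lap_def dv pk
        by (simp add: algebra_simps)
    qed
  qed simp
  also have "\<dots> = U i a - (\<Sum>k<n. P t i k / (sqrt (deg n P t i) * sqrt (deg n P t k)) * U k a)"
    using i by (simp add: sum_subtractf)
  finally have e: "V (t * n + i) a * s = U i a - (\<Sum>k<n. P t i k / (sqrt (deg n P t i) * sqrt (deg n P t k)) * U k a)"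
    using LtU by simp
  have sq: "sqrt s * sqrt s = s" using s by simp
  have ps: "sqrt s > 0" using s by simp
  have "ulse_Y n (\<lambda>_. s) U V t i a = V (t * n + i) a * sqrt s - U i a / sqrt s"
    unfolding ulse_Y_def by simp
  also have "\<dots> = (V (t * n + i) a * (sqrt s * sqrt s) - U i a) / sqrt s"
  proof -
    have "V (t * n + i) a * s / sqrt s = V (t * n + i) a * sqrt s"
      using ps sq by (metis mult.assoc nonzero_mult_div_cancel_right less_irrefl)
    then show ?thesis using sq by (simp add: diff_divide_distrib)
  qed
  also have "\<dots> = (V (t * n + i) a * s - U i a) / sqrt s" using sq by simp
  finally show ?thesis using e by simp
qed

theorem theorem3:
  fixes n K T :: nat and z :: "nat \<Rightarrow> nat" and B :: "nat \<Rightarrow> nat \<Rightarrow> nat \<Rightarrow> real"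
    and \<rho> :: real and \<sigma> :: "nat \<Rightarrow> real" and U V :: "nat \<Rightarrow> nat \<Rightarrow> real"
  defines "P \<equiv> dsbm_P \<rho> B z"
  defines "d \<equiv> K - 1"
  assumes K_le_n: "K \<le> n"
    and labels: "\<forall>i<n. z i < K"
    and B_sym: "\<forall>t<T. \<forall>k<K. \<forall>l<K. B t k l = B t l k"
    and B_range: "\<forall>t<T. \<forall>k<K. \<forall>l<K. 0 < B t k l \<and> B t k l \<le> 1"
    and rho: "0 < \<rho>" "\<rho> \<le> 1"
    and sv: "singular_values_asc n (n * T) (lapcat n P) \<sigma>"
    and Sigma_inv: "\<forall>a<d. \<sigma> (a + 1) \<noteq> 0"
    and U_on: "orthonormal_cols n d U"
    and V_on: "orthonormal_cols (n * T) d V"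
    and LV: "\<forall>i<n. \<forall>a<d. (\<Sum>c<n * T. lapcat n P i c * V c a) = U i a * \<sigma> (a + 1)"
    and LtU: "\<forall>c<n * T. \<forall>a<d. (\<Sum>i<n. lapcat n P i c * U i a) = V c a * \<sigma> (a + 1)"
  shows "(\<forall>t<T. \<forall>i<n. \<forall>j<n. (\<forall>k<n. P t i k = P t j k) \<longrightarrow>
            (\<forall>a<d. ulse_Y n \<sigma> U V t i a = ulse_Y n \<sigma> U V t j a))
       \<and> (\<forall>t<T. \<forall>u<T. \<forall>i<n. (\<forall>k<n. P t i k = P u i k) \<and> (\<forall>k<n. deg n P t k = deg n P u k) \<longrightarrow>
            (\<forall>a<d. ulse_Y n \<sigma> U V t i a = ulse_Y n \<sigma> U V u i a))"
proof -
  have symP: "\<forall>k<n. P t k i = P t i k" if "t < T" "i < n" for t i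
    using that labels B_sym by (auto simp: P_def dsbm_P_def)
  have spos: "0 < \<sigma> (a + 1)" if "a < d" for a
  proof -
    have "a + 1 < n" using that K_le_n unfolding d_def by auto
    then have "0 \<le> \<sigma> (a + 1)" using sv unfolding singular_values_asc_def by blast
    then show ?thesis using Sigma_inv that by force
  qed
  have Yeq: "ulse_Y n \<sigma> U V t i a =
     - (\<Sum>k<n. P t i k / (sqrt (deg n P t i) * sqrt (deg n P t k)) * U k a) / sqrt (\<sigma> (a + 1))"
    if "t < T" "i < n" "a < d" for t i a
  proof -
    have c: "t * n + i < n * T"
    proof -
      have "t * n + i < t * n + n" using that by simp
      also have "\<dots> = (t + 1) * n" by simp
      also have "\<dots> \<le> T * n" using that by (intro mult_right_mono) auto
      finally show ?thesis by (simp add: mult.commute)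
    qed
    have "ulse_Y n \<sigma> U V t i a = ulse_Y n (\<lambda>_. \<sigma> (a + 1)) U V t i a"
      by (simp add: ulse_Y_def)
    also have "\<dots> = - (\<Sum>k<n. P t i k / (sqrt (deg n P t i) * sqrt (deg n P t k)) * U k a) / sqrt (\<sigma> (a + 1))"
      by (rule key[where P=P and t=t and i=i and n=n, OF symP[OF that(1,2)] that(2) that(1)])
        (use LtU c that spos in auto)
    finally show ?thesis .
  qed
  have degeq: "deg n P t i = deg n P t j" if "\<forall>k<n. P t i k = P t j k" for t i j
    using that unfolding deg_def by (intro sum.cong) auto
  show ?thesis
  proof (intro conjI allI impI)
    fix t i j a assume h: "t < T" "i < n" "j < n" "\<forall>k<n. P t i k = P t j k" "a < d"
    show "ulse_Y n \<sigma> U V t i a = ulse_Y n \<sigma> U V t j a"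
    proof -
      have "(\<Sum>k<n. P t i k / (sqrt (deg n P t i) * sqrt (deg n P t k)) * U k a)
          = (\<Sum>k<n. P t j k / (sqrt (deg n P t j) * sqrt (deg n P t k)) * U k a)"
        using degeq[OF h(4)] h(4) by (intro sum.cong) auto
      then show ?thesis using Yeq[OF h(1,2,5)] Yeq[OF h(1,3,5)] by simp
    qed
  next
    fix t u i a assume h: "t < T" "u < T" "i < n"
      "(\<forall>k<n. P t i k = P u i k) \<and> (\<forall>k<n. deg n P t k = deg n P u k)" "a < d"
    show "ulse_Y n \<sigma> U V t i a = ulse_Y n \<sigma> U V u i a"
    proof -
      have "(\<Sum>k<n. P t i k / (sqrt (deg n P t i) * sqrt (deg n P t k)) * U k a)
          = (\<Sum>k<n. P u i k / (sqrt (deg n P u i) * sqrt (deg n P u k)) * U k a)"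
        using h(3,4) by (intro sum.cong) auto
      then show ?thesis using Yeq[OF h(1,3,5)] Yeq[OF h(2,3,5)] by simp
    qed
  qed
qed

end
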